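(* Let $X=\mathsf{X}_{A_0,A_1}$ be a vertex tree-shift. Then: - $X$ is uniformly strongly irreducible if and only if $X$ is uniformly block gluing; - $X$ is strongly irreducible if and only if $X$ is block gluing.
   Context: $\Sigma=\{0,1\}$. $\Sigma^*$ is the set of finite words, with $\epsilon$ the empty word. $|x|$ is the length of $x$, $\Sigma^k$ is the set of words of length $k$, and $\Sigma_n=\bigcup_{0\le k\le n}\Sigma^k$. A tree is $t:\Sigma^*\to\mathcal{A}$ with $\mathcal{A}$ finite, and we write $t_x=t(x)$. For $0$-$1$ matrices $A_0,A_1$ indexed by $\mathcal{A}$, the vertex tree-shift is $\mathsf{X}_{A_0,A_1}=\{t: A_0(t_x,t_{x0})=1,\ A_1(t_x,t_{x1})=1\ \forall x\in\Sigma^*\}$. The paper's convention is that tree-shifts of finite type are identified with vertex tree-shifts. A pattern $u$ is a map on a finite prefix-closed support $S(u)\subseteq\Sigma^*$. A pattern is accepted by $X$ if it occurs (at some node) in some $t\in X$. $B_n(X)=\{t|_{\Sigma_{n-1}}: t\in X\}$ is the set of $n$-blocks. For $w\in\Sigma^*$, $t|_{wS(v)}=v$ means $t_{wy}=v_y$ for all $y\in S(v)$. A leaf of $u$ is a $w\in S(u)$ with $w0,w1\notin S(u)$. A complete prefix code (CPC) is a finite set $P\subseteq\Sigma^*\setminus\{\epsilon\}$ such that no word of $P$ is a prefix of another, and every $x$ with $|x|\ge\max_{y\in P}|y|$ has a prefix in $P$. Patterns $u,v$ are connected through $P$ if there is $t\in X$ with $t|_{S(u)}=u$ and $t|_{wxS(v)}=v$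 for every leaf $w$ of $u$ and every $x\in P$. $X$ is: - block gluing (BG) if there is a CPC $P$ such that for every $n\ge1$ any $u,v\in B_n(X)$ are connected through $P$; - uniformly block gluing (UBG) if this holds with $P=\Sigma^k$ for some $k\ge1$; - strongly irreducible (SI) if there is a CPC $P$ through which any two patterns accepted by $X$ are connected; - uniformly strongly irreducible (USI) if this holds with $P=\Sigma^k$ for some $k\ge1$. *)

theory Defs
  imports Main "HOL-Library.Sublist"
begin

text \<open>Words over {0,1} are bool lists (False = 0, True = 1); x0 is x @ [False].
 Trees are functions bool list => 'a. Patterns are partial maps with finite
 prefix-closed domain (the support).\<close>

type_synonym 'a tree = "bool list \<Rightarrow> 'a"
type_synonym 'a pattern = "bool list \<Rightarrow> 'a option"

definition vshift :: "('a \<Rightarrow> 'a \<Rightarrow> bool) \<Rightarrow> ('a \<Rightarrow> 'a \<Rightarrow> bool) \<Rightarrow> 'a tree set" where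
  "vshift A0 A1 = {t. \<forall>x. A0 (t x) (t (x @ [False])) \<and> A1 (t x) (t (x @ [True]))}"

definition is_pattern :: "'a pattern \<Rightarrow> bool" where
  "is_pattern u \<longleftrightarrow> finite (dom u) \<and> (\<forall>x\<in>dom u. \<forall>y. prefix y x \<longrightarrow> y \<in> dom u)"

definition accepted :: "'a tree set \<Rightarrow> 'a pattern \<Rightarrow> bool" where
  "accepted X u \<longleftrightarrow> is_pattern u \<and> (\<exists>t\<in>X. \<exists>w. \<forall>y\<in>dom u. u y = Some (t (w @ y)))"

text \<open>n-blocks: restrictions of trees of X to Sigma_{n-1} = words of length < n.\<close>
definition blocks :: "'a tree set \<Rightarrow> nat \<Rightarrow> 'a pattern set" where
  "blocks X n = {(\<lambda>y. if length y < n then Some (t y) else None) | t. t \<in> X}"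

definition leaf :: "'a pattern \<Rightarrow> bool list \<Rightarrow> bool" where
  "leaf u w \<longleftrightarrow> w \<in> dom u \<and> w @ [False] \<notin> dom u \<and> w @ [True] \<notin> dom u"

definition connected_through :: "'a tree set \<Rightarrow> bool list set \<Rightarrow> 'a pattern \<Rightarrow> 'a pattern \<Rightarrow> bool" where
  "connected_through X P u v \<longleftrightarrow>
     (\<exists>t\<in>X. (\<forall>y\<in>dom u. u y = Some (t y)) \<and>
            (\<forall>w x y. leaf u w \<longrightarrow> x \<in> P \<longrightarrow> y \<in> dom v \<longrightarrow> v y = Some (t (w @ x @ y))))"

definition cpc :: "bool list set \<Rightarrow> bool" where
  "cpc P \<longleftrightarrow> finite P \<and> [] \<notin> P \<and> (\<forall>p\<in>P. \<forall>q\<in>P. p \<noteq> q \<longrightarrow> \<not> prefix p q) \<and>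
     (\<forall>x. Max (length ` P) \<le> length x \<longrightarrow> (\<exists>p\<in>P. prefix p x))"

definition block_gluing :: "'a tree set \<Rightarrow> bool" where
  "block_gluing X \<longleftrightarrow> (\<exists>P. cpc P \<and>
     (\<forall>n\<ge>1. \<forall>u\<in>blocks X n. \<forall>v\<in>blocks X n. connected_through X P u v))"

definition uniformly_block_gluing :: "'a tree set \<Rightarrow> bool" where
  "uniformly_block_gluing X \<longleftrightarrow> (\<exists>k\<ge>1.
     (\<forall>n\<ge>1. \<forall>u\<in>blocks X n. \<forall>v\<in>blocks X n. connected_through X {x. length x = k} u v))"

definition strongly_irreducible :: "'a tree set \<Rightarrow> bool" where
  "strongly_irreducible X \<longleftrightarrow> (\<exists>P. cpc P \<and>
     (\<forall>u v. accepted X u \<longrightarrow> accepted X v \<longrightarrow> connected_through X P u v))"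

definition uniformly_strongly_irreducible :: "'a tree set \<Rightarrow> bool" where
  "uniformly_strongly_irreducible X \<longleftrightarrow> (\<exists>k\<ge>1.
     (\<forall>u v. accepted X u \<longrightarrow> accepted X v \<longrightarrow> connected_through X {x. length x = k} u v))"

end

theory Submission
  imports Defs
begin

definition pfree :: "bool list set \<Rightarrow> bool" where
  "pfree Q \<longleftrightarrow> (\<forall>p\<in>Q. \<forall>q\<in>Q. p \<noteq> q \<longrightarrow> \<not> prefix p q)"

definition splice :: "'a tree \<Rightarrow> bool list set \<Rightarrow> (bool list \<Rightarrow> 'a tree) \<Rightarrow> 'a tree" where
  "splice t Q f y = (if \<exists>q\<in>Q. prefix q y
      then f (SOME q. q \<in> Q \<and> prefix q y) (drop (length (SOME q. q \<in> Q \<and> prefix q y)) y)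
      else t y)"

lemma pf_unique:
  assumes "pfree Q" "q \<in> Q" "q' \<in> Q" "prefix q y" "prefix q' y"
  shows "q = q'"
  using assms prefix_same_cases unfolding pfree_def by metis

lemma splice_at:
  assumes "pfree Q" "q \<in> Q"
  shows "splice t Q f (q @ z) = f q z"
proof -
  have ex: "\<exists>q'. q' \<in> Q \<and> prefix q' (q @ z)" using assms by auto
  define q' where "q' = (SOME q'. q' \<in> Q \<and> prefix q' (q @ z))"
  have "q' \<in> Q \<and> prefix q' (q @ z)" unfolding q'_def by (rule someI_ex[OF ex])
  then have "q' = q" using pf_unique[OF assms(1) _ assms(2)] by auto
  then show ?thesis unfolding splice_def using assms(2) q'_def by auto
qed

lemma splice_out:
  assumes "\<not> (\<exists>q\<in>Q. prefix q y)"
  shows "splice t Q f y = t y"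
  using assms unfolding splice_def by auto

lemma vshift_alt:
  "t \<in> vshift A0 A1 \<longleftrightarrow> (\<forall>x b. (if b then A1 else A0) (t x) (t (x @ [b])))"
proof
  assume "t \<in> vshift A0 A1"
  then show "\<forall>x b. (if b then A1 else A0) (t x) (t (x @ [b]))" unfolding vshift_def by auto
next
  assume h: "\<forall>x b. (if b then A1 else A0) (t x) (t (x @ [b]))"
  show "t \<in> vshift A0 A1" unfolding vshift_def
  proof (intro CollectI allI conjI)
    fix x show "A0 (t x) (t (x @ [False]))" using spec[OF spec[OF h, of x], of False] by simp
    show "A1 (t x) (t (x @ [True]))" using spec[OF spec[OF h, of x], of True] by simp
  qed
qed

lemma vshift_shift:
  assumes "t \<in> vshift A0 A1"
  shows "(\<lambda>y. t (z @ y)) \<in> vshift A0 A1"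
  using assms unfolding vshift_def by (auto, metis append.assoc, metis append.assoc)

lemma splice_vshift:
  assumes t: "t \<in> vshift A0 A1" and pf: "pfree Q"
    and f: "\<And>q. q \<in> Q \<Longrightarrow> f q \<in> vshift A0 A1 \<and> f q [] = t q"
  shows "splice t Q f \<in> vshift A0 A1"
  unfolding vshift_alt
proof (intro allI)
  fix x and b :: bool
  let ?S = "splice t Q f"
  let ?A = "if b then A1 else A0"
  show "?A (?S x) (?S (x @ [b]))"
  proof (cases "\<exists>q\<in>Q. prefix q x")
    case True
    then obtain q z where q: "q \<in> Q" "x = q @ z" by (auto simp: prefix_def)
    have "?S x = f q z" using splice_at[OF pf q(1)] q by simp
    moreover have "?S (x @ [b]) = f q (z @ [b])" using splice_at[OF pf q(1), of t f "z @ [b]"] q by simp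
    moreover have "?A (f q z) (f q (z @ [b]))" using f[OF q(1)] unfolding vshift_alt by blast
    ultimately show ?thesis by simp
  next
    case False
    then have sx: "?S x = t x" by (rule splice_out)
    show ?thesis
    proof (cases "\<exists>q\<in>Q. prefix q (x @ [b])")
      case True
      then obtain q where q: "q \<in> Q" "prefix q (x @ [b])" by auto
      then have "q = x @ [b]" using False by auto
      then have "?S (x @ [b]) = t (x @ [b])" using splice_at[OF pf q(1), of t f "[]"] f[OF q(1)] by simp
      then show ?thesis using sx t unfolding vshift_alt by simp
    next
      case False
      then have "?S (x @ [b]) = t (x @ [b])" by (rule splice_out)
      then show ?thesis using sx t unfolding vshift_alt by simp
    qed
  qed
qed

lemma leaves_pfree:
  assumes "is_pattern u"
  shows "pfree {w. leaf u w}"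
  unfolding pfree_def
proof (intro ballI impI notI)
  fix p q assume p: "p \<in> {w. leaf u w}" and q: "q \<in> {w. leaf u w}" and ne: "p \<noteq> q" and pr: "prefix p q"
  obtain c r where qe: "q = p @ c # r" using pr ne by (metis append_Nil2 neq_Nil_conv prefix_def)
  have "q \<in> dom u" using q unfolding leaf_def by auto
  moreover have "prefix (p @ [c]) q" using qe by simp
  ultimately have "p @ [c] \<in> dom u" using assms unfolding is_pattern_def by blast
  then show False using p by (cases c) (auto simp: leaf_def)
qed

lemma leaf_prefix_dom:
  assumes "is_pattern u" "leaf u w" "prefix w y" "y \<in> dom u"
  shows "y = w"
proof (rule ccontr)
  assume "y \<noteq> w"
  then obtain c r where ye: "y = w @ c # r" using assms(3) by (metis append_Nil2 neq_Nil_conv prefix_def)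
  have "prefix (w @ [c]) y" using ye by simp
  then have "w @ [c] \<in> dom u" using assms(1,4) unfolding is_pattern_def by blast
  then show False using assms(2) by (cases c) (auto simp: leaf_def)
qed

lemma main:
  assumes X: "X = vshift A0 A1" and pf: "pfree P"
    and H: "\<And>t1 t2. t1 \<in> X \<Longrightarrow> t2 \<in> X \<Longrightarrow> \<exists>t\<in>X. t [] = t1 [] \<and> (\<forall>x\<in>P. t x = t2 [])"
    and au: "accepted X u" and av: "accepted X v"
  shows "connected_through X P u v"
proof -
  obtain t1 w1 where t1: "t1 \<in> X" "\<forall>y\<in>dom u. u y = Some (t1 (w1 @ y))" and pu: "is_pattern u"
    using au unfolding accepted_def by blast
  obtain t2 w2 where t2: "t2 \<in> X" "\<forall>y\<in>dom v. v y = Some (t2 (w2 @ y))"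
    using av unfolding accepted_def by blast
  define tu where "tu = (\<lambda>y. t1 (w1 @ y))"
  define tv where "tv = (\<lambda>y. t2 (w2 @ y))"
  have tuX: "tu \<in> X" using t1 X vshift_shift unfolding tu_def by blast
  have tvX: "tv \<in> X" using t2 X vshift_shift unfolding tv_def by blast
  define s where "s = (\<lambda>w. SOME s. s \<in> X \<and> s [] = tu w \<and> (\<forall>x\<in>P. s x = tv []))"
  have s: "s w \<in> X \<and> s w [] = tu w \<and> (\<forall>x\<in>P. s w x = tv [])" for w
  proof -
    have "(\<lambda>y. tu (w @ y)) \<in> X" using tuX X vshift_shift by blast
    from H[OF this tvX] have "\<exists>s. s \<in> X \<and> s [] = tu w \<and> (\<forall>x\<in>P. s x = tv [])" by auto
    then show ?thesis unfolding s_def by (rule someI_ex)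
  qed
  define g where "g = (\<lambda>w. splice (s w) P (\<lambda>_. tv))"
  have gX: "g w \<in> X" for w
    unfolding g_def X using splice_vshift[of "s w" A0 A1 P "\<lambda>_. tv"] s[of w] tvX X pf by auto
  have groot: "g w [] = tu w" for w
  proof (cases "\<exists>q\<in>P. prefix q []")
    case True
    then have "[] \<in> P" by auto
    then have "s w [] = tv []" using s[of w] by blast
    then show ?thesis using splice_at[OF pf \<open>[] \<in> P\<close>, of "s w" "\<lambda>_. tv" "[]"] s[of w] unfolding g_def by simp
  next
    case False
    have "g w [] = s w []" unfolding g_def by (rule splice_out[OF False])
    then show ?thesis using s[of w] by simp
  qed
  have gP: "x \<in> P \<Longrightarrow> g w (x @ y) = tv y" for w x y
    unfolding g_def using splice_at[OF pf, of x "s w" "\<lambda>_. tv" y] by simp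
  define T where "T = splice tu {w. leaf u w} g"
  have lpf: "pfree {w. leaf u w}" using leaves_pfree[OF pu] .
  have TX: "T \<in> X" unfolding T_def X
    using splice_vshift[OF _ lpf, of tu A0 A1 g] tuX gX groot X by auto
  show ?thesis unfolding connected_through_def
  proof (intro bexI[OF _ TX] conjI allI impI ballI)
    fix y assume y: "y \<in> dom u"
    have "T y = tu y"
    proof (cases "\<exists>q\<in>{w. leaf u w}. prefix q y")
      case True
      then obtain q where q: "leaf u q" "prefix q y" by auto
      then have "y = q" using leaf_prefix_dom[OF pu] y by blast
      then show ?thesis unfolding T_def using splice_at[OF lpf, of q tu g "[]"] q groot by simp
    next
      case False
      then show ?thesis unfolding T_def by (rule splice_out)
    qed
    then show "u y = Some (T y)" using t1 y unfolding tu_def by simp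
  next
    fix w x y assume w: "leaf u w" and x: "x \<in> P" and y: "y \<in> dom v"
    have "T (w @ x @ y) = g w (x @ y)" unfolding T_def using splice_at[OF lpf] w by simp
    also have "\<dots> = tv y" using gP[OF x] .
    finally show "v y = Some (T (w @ x @ y))" using t2 y unfolding tv_def by simp
  qed
qed

lemma block_accepted:
  assumes "u \<in> blocks X n"
  shows "accepted X u"
proof -
  obtain t where t: "t \<in> X" "u = (\<lambda>y. if length y < n then Some (t y) else None)"
    using assms unfolding blocks_def by blast
  have d: "dom u = {y. length y < n}" using t by (auto split: if_splits)
  have "finite {y::bool list. length y < n}"
  proof -
    have "{y::bool list. length y < n} \<subseteq> {y. set y \<subseteq> UNIV \<and> length y \<le> n}" by auto
    moreover have "finite {y::bool list. set y \<subseteq> UNIV \<and> length y \<le> n}"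
      by (rule finite_lists_length_le) simp
    ultimately show ?thesis by (rule finite_subset)
  qed
  moreover have "\<forall>x\<in>dom u. \<forall>y. prefix y x \<longrightarrow> y \<in> dom u"
    using d by (auto dest: prefix_length_le)
  ultimately have "is_pattern u" unfolding is_pattern_def using d by simp
  then show ?thesis unfolding accepted_def using t by (intro conjI bexI[of _ t] exI[of _ "[]"]) (auto split: if_splits)
qed

lemma bg1:
  assumes "\<forall>u\<in>blocks X 1. \<forall>v\<in>blocks X 1. connected_through X P u v"
    and "t1 \<in> X" "t2 \<in> X"
  shows "\<exists>t\<in>X. t [] = t1 [] \<and> (\<forall>x\<in>P. t x = t2 [])"
proof -
  define u where "u = (\<lambda>y::bool list. if length y < 1 then Some (t1 y) else None)"
  define v where "v = (\<lambda>y::bool list. if length y < 1 then Some (t2 y) else None)"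
  have "u \<in> blocks X 1" "v \<in> blocks X 1" using assms unfolding u_def v_def blocks_def by auto
  then have "connected_through X P u v" using assms(1) by blast
  then obtain t where t: "t \<in> X" "\<forall>y\<in>dom u. u y = Some (t y)"
    "\<forall>w x y. leaf u w \<longrightarrow> x \<in> P \<longrightarrow> y \<in> dom v \<longrightarrow> v y = Some (t (w @ x @ y))"
    unfolding connected_through_def by blast
  have "leaf u []" unfolding leaf_def u_def by auto
  moreover have "[] \<in> dom v" "[] \<in> dom u" unfolding v_def u_def by auto
  ultimately have "u [] = Some (t [])" using t(2) by blast
  then have "t [] = t1 []" unfolding u_def by simp
  moreover have "\<forall>x\<in>P. t x = t2 []"
  proof
    fix x assume "x \<in> P"
    then have "v [] = Some (t ([] @ x @ []))" using t(3) \<open>leaf u []\<close> \<open>[] \<in> dom v\<close> by blast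
    then show "t x = t2 []" unfolding v_def by simp
  qed
  ultimately show ?thesis using t(1) by blast
qed

lemma pfree_len: "pfree {x::bool list. length x = k}"
  unfolding pfree_def
proof (intro ballI impI notI)
  fix p q :: "bool list" assume "p \<in> {x. length x = k}" "q \<in> {x. length x = k}" "p \<noteq> q" "prefix p q"
  then show False by (auto simp: prefix_def)
qed

lemma cpc_pfree: "cpc P \<Longrightarrow> pfree P"
  unfolding cpc_def pfree_def by blast

theorem theorem3p6:
  fixes A0 A1 :: "'a::finite \<Rightarrow> 'a \<Rightarrow> bool"
  shows "(uniformly_strongly_irreducible (vshift A0 A1) \<longleftrightarrow> uniformly_block_gluing (vshift A0 A1))
       \<and> (strongly_irreducible (vshift A0 A1) \<longleftrightarrow> block_gluing (vshift A0 A1))"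
proof (intro conjI iffI)
  assume "uniformly_strongly_irreducible (vshift A0 A1)"
  then show "uniformly_block_gluing (vshift A0 A1)"
    unfolding uniformly_strongly_irreducible_def uniformly_block_gluing_def
    using block_accepted by blast
next
  assume "uniformly_block_gluing (vshift A0 A1)"
  then obtain k where k: "k \<ge> 1"
    "\<forall>n\<ge>1. \<forall>u\<in>blocks (vshift A0 A1) n. \<forall>v\<in>blocks (vshift A0 A1) n.
       connected_through (vshift A0 A1) {x. length x = k} u v"
    unfolding uniformly_block_gluing_def by blast
  show "uniformly_strongly_irreducible (vshift A0 A1)"
    unfolding uniformly_strongly_irreducible_def
  proof (intro exI[of _ k] conjI allI impI k(1))
    fix u v assume "accepted (vshift A0 A1) u" "accepted (vshift A0 A1) v"
    moreover have "\<forall>u\<in>blocks (vshift A0 A1) 1. \<forall>v\<in>blocks (vshift A0 A1) 1.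
       connected_through (vshift A0 A1) {x. length x = k} u v" using k(2) order_refl by blast
    ultimately show "connected_through (vshift A0 A1) {x. length x = k} u v"
      using main[where X="vshift A0 A1" and ?A0.0=A0 and ?A1.0=A1, OF refl pfree_len] bg1 by blast
  qed
next
  assume "strongly_irreducible (vshift A0 A1)"
  then show "block_gluing (vshift A0 A1)"
    unfolding strongly_irreducible_def block_gluing_def
    using block_accepted by blast
next
  assume "block_gluing (vshift A0 A1)"
  then obtain P where P: "cpc P"
    "\<forall>n\<ge>1. \<forall>u\<in>blocks (vshift A0 A1) n. \<forall>v\<in>blocks (vshift A0 A1) n.
       connected_through (vshift A0 A1) P u v"
    unfolding block_gluing_def by blast
  show "strongly_irreducible (vshift A0 A1)"
    unfolding strongly_irreducible_def
  proof (intro exI[of _ P] conjI allI impI P(1))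
    fix u v assume "accepted (vshift A0 A1) u" "accepted (vshift A0 A1) v"
    moreover have "\<forall>u\<in>blocks (vshift A0 A1) 1. \<forall>v\<in>blocks (vshift A0 A1) 1.
       connected_through (vshift A0 A1) P u v" using P(2) order_refl by blast
    ultimately show "connected_through (vshift A0 A1) P u v"
      using main[where X="vshift A0 A1" and ?A0.0=A0 and ?A1.0=A1, OF refl cpc_pfree[OF P(1)]] bg1 by blast
  qed
qed

end
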